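(* Let $\mathcal{M}$ be a deterministic MDP and $\mathcal{D}$ a dataset. Let $\pi_{\text{BCQL}}$ and $\pi_{\text{SCQL}}$ be the policies produced by BCQL and SCQL respectively. Then $V_{\pi_{\text{SCQL}}}(s)\ge V_{\pi_{\text{BCQL}}}(s)$ for all $s\in\mathcal{D}$.
   Context: A deterministic MDP has transition probabilities $p(s'|s,a)\in\{0,1\}$, rewards $r(s,a,s')=r(s,s')$ and discount $0\le\gamma<1$. State reachability: $s'\in\mathcal{SR}_{\mathcal{M}}(s)$ iff there is an action $a$ with $p(s'|s,a)=1$. The dataset $\mathcal{D}$ is a fixed collection of transitions $(s,a,r,s')$; "$s\in\mathcal{D}$" means $s$ appears as a state in $\mathcal{D}$ and "$(s,a)\in\mathcal{D}$" means the pair appears in a transition. Batch-constrained Q-learning (BCQL) performs $Q(s,a)\leftarrow(1-\alpha)Q(s,a)+\alpha[r(s,a,s')+\gamma\max_{a':(s',a')\in\mathcal{D}}Q(s',a')]$ on dataset transitions and outputs the policy $\pi_{\text{BCQL}}(s)=\operatorname{argmax}_{a:(s,a)\in\mathcal{D}}Q(s,a)$. State-constrained QSS-learning (SCQL) performs $Q(s,s')\leftarrow(1-\alpha)Q(s,s')+\alpha[r(s,s')+\gamma\max_{s'':s''\in\mathcal{D},\,s''\in\mathcal{SR}_{\mathcal{M}}(s')}Q(s',s'')]$ and outputs the policy $\pi_{\text{SCQL}}(s)=\operatorname{argmax}_{s':s'\in\mathcal{D},\,s'\in\mathcal{SR}_{\mathcal{M}}(s)}Q(s,s')$ (executed via an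 action leading from $s$ to that next state). $V_\pi(s)$ denotes the value (expected discounted return) of policy $\pi$ from state $s$. The policies are those obtained from the converged $Q$-values of the respective procedures. *)

theory Defs
  imports Complex_Main
begin

text \<open>Deterministic MDP: a total transition function nxt :: state => action => state
  (p(s'|s,a) = 1 iff s' = nxt s a), rewards r :: state => state => real.
  A dataset is a set of transitions (s, a, reward, s').\<close>

definition SR :: "('s \<Rightarrow> 'a \<Rightarrow> 's) \<Rightarrow> 's \<Rightarrow> 's set" where
  "SR nxt s = {s'. \<exists>a. nxt s a = s'}"

definition ds_states :: "('s \<times> 'a \<times> real \<times> 's) set \<Rightarrow> 's set" where
  "ds_states D = {s. \<exists>a rr s'. (s, a, rr, s') \<in> D} \<union> {s'. \<exists>s a rr. (s, a, rr, s') \<in> D}"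

definition ds_pairs :: "('s \<times> 'a \<times> real \<times> 's) set \<Rightarrow> ('s \<times> 'a) set" where
  "ds_pairs D = {(s, a). \<exists>rr s'. (s, a, rr, s') \<in> D}"

definition ds_consistent ::
  "('s \<Rightarrow> 'a \<Rightarrow> 's) \<Rightarrow> ('s \<Rightarrow> 's \<Rightarrow> real) \<Rightarrow> ('s \<times> 'a \<times> real \<times> 's) set \<Rightarrow> bool" where
  "ds_consistent nxt r D \<longleftrightarrow> (\<forall>(s, a, rr, s') \<in> D. s' = nxt s a \<and> rr = r s s')"

definition bcql_fixpoint ::
  "real \<Rightarrow> ('s \<times> 'a \<times> real \<times> 's) set \<Rightarrow> ('s \<Rightarrow> 'a \<Rightarrow> real) \<Rightarrow> bool" where
  "bcql_fixpoint \<gamma> D Q \<longleftrightarrow>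
     (\<forall>(s, a, rr, s') \<in> D.
        Q s a = rr + \<gamma> * Max ((\<lambda>a'. Q s' a') ` {a'. (s', a') \<in> ds_pairs D}))"

definition scql_fixpoint ::
  "('s \<Rightarrow> 'a \<Rightarrow> 's) \<Rightarrow> ('s \<Rightarrow> 's \<Rightarrow> real) \<Rightarrow> real \<Rightarrow> ('s \<times> 'a \<times> real \<times> 's) set
     \<Rightarrow> ('s \<Rightarrow> 's \<Rightarrow> real) \<Rightarrow> bool" where
  "scql_fixpoint nxt r \<gamma> D Q \<longleftrightarrow>
     (\<forall>s \<in> ds_states D. \<forall>s' \<in> ds_states D. s' \<in> SR nxt s \<longrightarrow>
        Q s s' = r s s' + \<gamma> * Max ((\<lambda>s''. Q s' s'') ` {s''. s'' \<in> ds_states D \<and> s'' \<in> SR nxt s'}))"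

definition bcql_policy ::
  "('s \<times> 'a \<times> real \<times> 's) set \<Rightarrow> ('s \<Rightarrow> 'a \<Rightarrow> real) \<Rightarrow> ('s \<Rightarrow> 'a) \<Rightarrow> bool" where
  "bcql_policy D Q \<pi> \<longleftrightarrow>
     (\<forall>s \<in> ds_states D. (s, \<pi> s) \<in> ds_pairs D \<and>
        (\<forall>a. (s, a) \<in> ds_pairs D \<longrightarrow> Q s a \<le> Q s (\<pi> s)))"

text \<open>pi is (an action-level execution of) an SCQL greedy policy: at each dataset state it
  takes an action leading to a next state that maximises Q(s,.) over reachable dataset states.\<close>
definition scql_policy ::
  "('s \<Rightarrow> 'a \<Rightarrow> 's) \<Rightarrow> ('s \<times> 'a \<times> real \<times> 's) set \<Rightarrow> ('s \<Rightarrow> 's \<Rightarrow> real) \<Rightarrow> ('s \<Rightarrow> 'a) \<Rightarrow> bool" where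
  "scql_policy nxt D Q \<pi> \<longleftrightarrow>
     (\<forall>s \<in> ds_states D. nxt s (\<pi> s) \<in> ds_states D \<and>
        (\<forall>t. t \<in> ds_states D \<and> t \<in> SR nxt s \<longrightarrow> Q s t \<le> Q s (nxt s (\<pi> s))))"

definition traj :: "('s \<Rightarrow> 'a \<Rightarrow> 's) \<Rightarrow> ('s \<Rightarrow> 'a) \<Rightarrow> 's \<Rightarrow> nat \<Rightarrow> 's" where
  "traj nxt \<pi> s n = ((\<lambda>x. nxt x (\<pi> x)) ^^ n) s"

definition policy_value ::
  "('s \<Rightarrow> 'a \<Rightarrow> 's) \<Rightarrow> ('s \<Rightarrow> 's \<Rightarrow> real) \<Rightarrow> real \<Rightarrow> ('s \<Rightarrow> 'a) \<Rightarrow> 's \<Rightarrow> real" where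
  "policy_value nxt r \<gamma> \<pi> s = (\<Sum>n. \<gamma> ^ n * r (traj nxt \<pi> s n) (traj nxt \<pi> s (Suc n)))"

end

theory Submission
  imports Defs
begin

lemma traj_in:
  assumes "\<forall>x\<in>S. nxt x (\<pi> x) \<in> S" "s \<in> S"
  shows "traj nxt \<pi> s n \<in> S"
  using assms unfolding traj_def by (induction n) auto

lemma traj_Suc:
  "traj nxt \<pi> s (Suc n) = traj nxt \<pi> (nxt s (\<pi> s)) n"
  unfolding traj_def by (simp add: funpow_Suc_right del: funpow.simps)

lemma pv_step:
  assumes S: "finite S" "\<forall>x\<in>S. nxt x (\<pi> x) \<in> S" "s \<in> S"
    and g: "0 \<le> \<gamma>" "\<gamma> < 1"
  shows "policy_value nxt r \<gamma> \<pi> s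
     = r s (nxt s (\<pi> s)) + \<gamma> * policy_value nxt r \<gamma> \<pi> (nxt s (\<pi> s))"
proof -
  define a where "a n = \<gamma> ^ n * r (traj nxt \<pi> s n) (traj nxt \<pi> s (Suc n))" for n
  define B where "B = Max ((\<lambda>(x,y). \<bar>r x y\<bar>) ` (S \<times> S))"
  have fin: "finite ((\<lambda>(x,y). \<bar>r x y\<bar>) ` (S \<times> S))" using S by auto
  have bnd: "\<bar>r x y\<bar> \<le> B" if "x \<in> S" "y \<in> S" for x y
    unfolding B_def using that fin by (intro Max_ge) auto
  have nb: "norm (a n) \<le> B * \<gamma> ^ n" for n
  proof -
    have "\<bar>r (traj nxt \<pi> s n) (traj nxt \<pi> s (Suc n))\<bar> \<le> B"
      using traj_in[where S=S and nxt=nxt and \<pi>=\<pi>, OF S(2,3)] by (intro bnd)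
    then have "\<gamma> ^ n * \<bar>r (traj nxt \<pi> s n) (traj nxt \<pi> s (Suc n))\<bar> \<le> \<gamma> ^ n * B"
      by (rule mult_left_mono) (simp add: g)
    then show ?thesis unfolding a_def using g
      by (simp add: abs_mult mult.commute)
  qed
  have sg: "summable (\<lambda>n. B * \<gamma> ^ n)" using g by simp
  have sa: "summable a" by (rule summable_comparison_test'[where N=0, OF sg nb])
  define b where "b n = \<gamma> ^ n * r (traj nxt \<pi> (nxt s (\<pi> s)) n) (traj nxt \<pi> (nxt s (\<pi> s)) (Suc n))" for n
  have h1: "(\<Sum>n. a (Suc n)) = suminf a - a 0" using suminf_split_head[OF sa] .
  have h2: "(\<lambda>n. a (Suc n)) = (\<lambda>n. \<gamma> * b n)"
    unfolding a_def b_def by (simp add: traj_Suc mult.assoc del: traj_def)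
  have sb: "summable b"
  proof (cases "\<gamma> = 0")
    case True then show ?thesis unfolding b_def by (simp add: mult.commute[of "0 ^ _"])
  next
    case False
    have "summable (\<lambda>n. a (Suc n))" using sa by (simp only: summable_Suc_iff)
    then have "summable (\<lambda>n. inverse \<gamma> * a (Suc n))" by (rule summable_mult)
    moreover have "(\<lambda>n. inverse \<gamma> * a (Suc n)) = b"
      using False fun_cong[OF h2] by (simp add: field_simps)
    ultimately show ?thesis by simp
  qed
  have "suminf a - a 0 = \<gamma> * suminf b"
    unfolding h1[symmetric] h2 using suminf_mult[OF sb] by simp
  moreover have "suminf b = policy_value nxt r \<gamma> \<pi> (nxt s (\<pi> s))"
    unfolding b_def policy_value_def ..
  moreover have "a 0 = r s (nxt s (\<pi> s))" unfolding a_def traj_def by simp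
  moreover have "suminf a = policy_value nxt r \<gamma> \<pi> s" unfolding a_def policy_value_def ..
  ultimately show ?thesis by (simp add: algebra_simps)
qed

lemma min_arg:
  assumes "finite S" "\<forall>x\<in>S. f x \<in> S" "0 \<le> \<gamma>" "\<gamma> < 1"
    and "\<forall>x\<in>S. g x \<ge> \<gamma> * g (f x)" "s \<in> S"
  shows "g s \<ge> (0::real)"
proof -
  have ne: "S \<noteq> {}" using assms(6) by blast
  obtain x0 where x0a: "x0 \<in> S" and x0m: "Min (g ` S) = g x0"
    using obtains_MIN[OF assms(1) ne, of g] by blast
  have x0: "x0 \<in> S" "\<And>y. y \<in> S \<Longrightarrow> g x0 \<le> g y"
    using x0a apply blast
    unfolding x0m[symmetric] using assms(1) by simp
  have fx: "f x0 \<in> S" using assms(2) x0(1) by blast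
  have "g x0 \<ge> \<gamma> * g (f x0)" using assms(5) x0(1) by blast
  moreover have "\<gamma> * g (f x0) \<ge> \<gamma> * g x0"
    using x0(2)[OF fx] assms(3) by (rule mult_left_mono)
  ultimately have "(1 - \<gamma>) * g x0 \<ge> 0" by (simp add: algebra_simps)
  then have "g x0 \<ge> 0" using assms(4) by (simp add: zero_le_mult_iff)
  then show ?thesis using x0(2)[OF assms(6)] by linarith
qed

theorem theorem3p7:
  fixes nxt :: "'s \<Rightarrow> 'a \<Rightarrow> 's" and r :: "'s \<Rightarrow> 's \<Rightarrow> real" and \<gamma> :: real
    and D :: "('s \<times> 'a \<times> real \<times> 's) set"
    and Qb :: "'s \<Rightarrow> 'a \<Rightarrow> real" and Qs :: "'s \<Rightarrow> 's \<Rightarrow> real"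
    and \<pi>b \<pi>s :: "'s \<Rightarrow> 'a"
  assumes "0 \<le> \<gamma>" and "\<gamma> < 1"
    and "finite D"
    and "ds_consistent nxt r D"
    and "\<forall>s \<in> ds_states D. \<exists>a. (s, a) \<in> ds_pairs D"
    and "bcql_fixpoint \<gamma> D Qb"
    and "scql_fixpoint nxt r \<gamma> D Qs"
    and "bcql_policy D Qb \<pi>b"
    and "scql_policy nxt D Qs \<pi>s"
  shows "\<forall>s \<in> ds_states D. policy_value nxt r \<gamma> \<pi>s s \<ge> policy_value nxt r \<gamma> \<pi>b s"
proof
  fix s0 assume s0: "s0 \<in> ds_states D"
  define S where "S = ds_states D"
  have "ds_states D = fst ` D \<union> (\<lambda>(s,a,rr,s'). s') ` D"
    unfolding ds_states_def by force
  then have finS: "finite S" unfolding S_def using assms(3) by simp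
  define fs where "fs x = nxt x (\<pi>s x)" for x
  define fb where "fb x = nxt x (\<pi>b x)" for x
  define Vs where "Vs x = Qs x (fs x)" for x
  define W where "W x = policy_value nxt r \<gamma> \<pi>s x" for x
  define U where "U x = policy_value nxt r \<gamma> \<pi>b x" for x
  have fsS: "\<forall>x\<in>S. fs x \<in> S" using assms(9) unfolding scql_policy_def fs_def S_def by blast
  have fsR: "fs x \<in> SR nxt x" for x unfolding SR_def fs_def by blast
  have fbS: "\<forall>x\<in>S. fb x \<in> S"
  proof
    fix x assume "x \<in> S"
    then have "(x, \<pi>b x) \<in> ds_pairs D" using assms(8) unfolding bcql_policy_def S_def by blast
    then obtain rr s' where "(x, \<pi>b x, rr, s') \<in> D" unfolding ds_pairs_def by blast
    moreover then have "s' = fb x" using assms(4) unfolding ds_consistent_def fb_def by fastforce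
    ultimately show "fb x \<in> S" unfolding S_def ds_states_def by blast
  qed
  have fbR: "fb x \<in> SR nxt x" for x unfolding SR_def fb_def by blast
  have greedy: "Qs x t \<le> Vs x" if "x \<in> S" "t \<in> S" "t \<in> SR nxt x" for x t
    using assms(9) that unfolding scql_policy_def Vs_def fs_def S_def by blast
  have MaxV: "Max ((\<lambda>s''. Qs t s'') ` {s''. s'' \<in> ds_states D \<and> s'' \<in> SR nxt t}) = Vs t"
    if "t \<in> S" for t
  proof (rule Max_eqI)
    show "finite ((\<lambda>s''. Qs t s'') ` {s''. s'' \<in> ds_states D \<and> s'' \<in> SR nxt t})"
      using finS unfolding S_def by auto
    show "\<And>y. y \<in> (\<lambda>s''. Qs t s'') ` {s''. s'' \<in> ds_states D \<and> s'' \<in> SR nxt t} \<Longrightarrow> y \<le> Vs t"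
      using greedy that unfolding S_def by blast
    show "Vs t \<in> (\<lambda>s''. Qs t s'') ` {s''. s'' \<in> ds_states D \<and> s'' \<in> SR nxt t}"
      unfolding Vs_def using fsS fsR that unfolding S_def by blast
  qed
  have Qeq: "Qs x t = r x t + \<gamma> * Vs t" if "x \<in> S" "t \<in> S" "t \<in> SR nxt x" for x t
    using assms(7) that MaxV[OF that(2)] unfolding scql_fixpoint_def S_def by auto
  have Vs_eq: "Vs x = r x (fs x) + \<gamma> * Vs (fs x)" if "x \<in> S" for x
    using Qeq[OF that] fsS fsR that unfolding Vs_def by blast
  have W_eq: "W x = r x (fs x) + \<gamma> * W (fs x)" if "x \<in> S" for x
    unfolding W_def fs_def using pv_step[OF finS _ that assms(1,2)] fsS unfolding fs_def by blast
  have U_eq: "U x = r x (fb x) + \<gamma> * U (fb x)" if "x \<in> S" for x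
    unfolding U_def fb_def using pv_step[OF finS _ that assms(1,2)] fbS unfolding fb_def by blast
  have "\<forall>x\<in>S. (W x - Vs x) \<ge> \<gamma> * (W (fs x) - Vs (fs x))"
    using W_eq Vs_eq by (simp add: algebra_simps)
  from min_arg[OF finS fsS assms(1,2) this] have "\<forall>x\<in>S. W x \<ge> Vs x" by simp
  moreover have "\<forall>x\<in>S. (Vs x - U x) \<ge> \<gamma> * (Vs (fb x) - U (fb x))"
  proof
    fix x assume x: "x \<in> S"
    have "Vs x \<ge> r x (fb x) + \<gamma> * Vs (fb x)"
      using greedy[OF x] Qeq[OF x] fbS fbR x by force
    then show "(Vs x - U x) \<ge> \<gamma> * (Vs (fb x) - U (fb x))"
      using U_eq[OF x] by (simp add: algebra_simps)
  qed
  from min_arg[OF finS fbS assms(1,2) this] have "\<forall>x\<in>S. Vs x \<ge> U x" by simp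
  ultimately show "policy_value nxt r \<gamma> \<pi>s s0 \<ge> policy_value nxt r \<gamma> \<pi>b s0"
    using s0 unfolding S_def W_def U_def by force
qed

end
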